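(* A general ring $I$ is strongly regular if and only if $I$ is quasipolar and $QN(I)=\{0\}$.
   Context: A general ring is an associative ring not necessarily having an identity. For $p,q\in I$, $p*q=p+q-pq$; $Q(I)=\{q\in I\mid p*q=0=q*p \text{ for some } p\in I\}$; $\mathrm{comm}(a)=\{x\in I\mid xa=ax\}$, $\mathrm{comm}^2(a)=\{x\in I\mid xy=yx\text{ for all }y\in\mathrm{comm}(a)\}$; $QN(I)=\{q\in I\mid qx\in Q(I)\text{ for every }x\in\mathrm{comm}(q)\}$. An element $a\in I$ is quasipolar in $I$ if there is an idempotent $p=p^2\in\mathrm{comm}^2(a)$ with $a+p\in Q(I)$ and $a-ap\in QN(I)$; $I$ is quasipolar if every element is. An element $a$ is strongly regular if $a=aba$ for some $b\in I$ with $ab=ba$; $I$ is strongly regular if every element is. *)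

theory Defs
  imports Main
begin

text \<open>General (possibly non-unital) associative rings are modelled by the type class ring.
  All notions below are relative to the whole ring, i.e. the type.\<close>

definition circ_op :: "'a::ring \<Rightarrow> 'a \<Rightarrow> 'a" (infixl "\<star>" 70) where
  "p \<star> q = p + q - p * q"

definition Qset :: "'a::ring set" where
  "Qset = {q. \<exists>p. p \<star> q = 0 \<and> q \<star> p = 0}"

definition comm :: "'a::ring \<Rightarrow> 'a set" where
  "comm a = {x. x * a = a * x}"

definition comm2 :: "'a::ring \<Rightarrow> 'a set" where
  "comm2 a = {x. \<forall>y\<in>comm a. x * y = y * x}"

definition QNset :: "'a::ring set" where
  "QNset = {q. \<forall>x\<in>comm q. q * x \<in> Qset}"

definition quasipolar_elem :: "'a::ring \<Rightarrow> bool" where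
  "quasipolar_elem a \<longleftrightarrow>
     (\<exists>p. p * p = p \<and> p \<in> comm2 a \<and> a + p \<in> Qset \<and> a - a * p \<in> QNset)"

definition quasipolar_ring :: "'a::ring itself \<Rightarrow> bool" where
  "quasipolar_ring _ \<longleftrightarrow> (\<forall>a::'a. quasipolar_elem a)"

definition strongly_regular_elem :: "'a::ring \<Rightarrow> bool" where
  "strongly_regular_elem a \<longleftrightarrow> (\<exists>b. a = a * b * a \<and> a * b = b * a)"

definition strongly_regular_ring :: "'a::ring itself \<Rightarrow> bool" where
  "strongly_regular_ring _ \<longleftrightarrow> (\<forall>a::'a. strongly_regular_elem a)"

end

theory Submission
  imports Defs
begin

lemma zero_in_Q: "(0::'a::ring) \<in> Qset"
  unfolding Qset_def circ_op_def by (rule CollectI, rule exI[of _ 0]) simp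

lemma zero_in_QN: "(0::'a::ring) \<in> QNset"
  unfolding QNset_def using zero_in_Q by auto

lemma idem_Q_zero:
  fixes e :: "'a::ring"
  assumes "e * e = e" "e \<in> Qset" shows "e = 0"
proof -
  from assms(2) obtain p where h: "p + e - p * e = 0" unfolding Qset_def circ_op_def by auto
  hence "(p + e - p * e) * e = 0" by simp
  hence "p * e + e * e - p * (e * e) = 0" by (simp add: algebra_simps)
  thus ?thesis using assms(1) by simp
qed

lemma sr_QN:
  fixes q :: "'a::ring"
  assumes sr: "strongly_regular_elem q" and qn: "q \<in> QNset" shows "q = 0"
proof -
  from sr obtain b where b: "q = q * b * q" "q * b = b * q" unfolding strongly_regular_elem_def by auto
  have "b \<in> comm q" unfolding comm_def using b(2) by simp
  hence Q: "q * b \<in> Qset" using qn unfolding QNset_def by auto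
  have "(q * b) * (q * b) = (q * b * q) * b" by (simp add: mult.assoc)
  also have "\<dots> = q * b" using b(1) by simp
  finally have "q * b = 0" using idem_Q_zero Q by blast
  hence "q * b * q = 0" by simp
  thus ?thesis using b(1) by simp
qed

lemma sr_qp:
  fixes a :: "'a::ring"
  assumes sr: "strongly_regular_elem a" shows "quasipolar_elem a"
proof -
  from sr obtain b where b: "a = a * b * a" "a * b = b * a" unfolding strongly_regular_elem_def by auto
  define c where "c = b * a * b"
  have ac: "a * c = a * b" unfolding c_def using b by (metis mult.assoc)
  have ca: "c * a = a * b" unfolding c_def using b by (metis mult.assoc)
  have aca: "a * c * a = a" using ac b by simp
  have cac: "c * a * c = c"
  proof -
    have "c * a * c = b * (a * b * a) * b * a * b" unfolding c_def by (simp add: mult.assoc)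
    also have "\<dots> = b * (a * b * a) * b" using b(1) by (simp add: mult.assoc)
    also have "\<dots> = c" using b(1) unfolding c_def by simp
    finally show ?thesis .
  qed
  define e where "e = a * c"
  have comm_ac: "a * c = c * a" using ac ca by simp
  have ee: "e * e = e" unfolding e_def using aca by (simp add: mult.assoc[symmetric])
  have ae: "a * e = a" unfolding e_def using aca comm_ac by (metis mult.assoc)
  have ea: "e * a = a" unfolding e_def using aca by simp
  have ce: "c * e = c" unfolding e_def using cac by (simp add: mult.assoc)
  have ec: "e * c = c" unfolding e_def using cac comm_ac by (metis mult.assoc)
  have ca2: "c * a = e" unfolding e_def using comm_ac by simp
  have aa_c: "a * a * c = a" using aca comm_ac by (metis mult.assoc)
  have c2: "e \<in> comm2 a"
    unfolding comm2_def comm_def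
  proof (intro CollectI ballI)
    fix y assume "y \<in> {x. x * a = a * x}"
    hence y: "y * a = a * y" by simp
    have "e * y = c * y * a" unfolding e_def using comm_ac y by (metis mult.assoc)
    also have "\<dots> = c * y * (a * a * c)" using aa_c by simp
    also have "\<dots> = e * y * e" unfolding e_def using y comm_ac by (metis mult.assoc)
    finally have 1: "e * y = e * y * e" .
    have "y * e = a * y * c" unfolding e_def using y by (metis mult.assoc)
    also have "\<dots> = (a * c * a) * y * c" using aca by simp
    also have "\<dots> = e * y * e" unfolding e_def using y by (metis mult.assoc)
    finally have 2: "y * e = e * y * e" .
    show "e * y = y * e" using 1 2 by simp
  qed
  have Q: "a + e \<in> Qset"
    unfolding Qset_def circ_op_def
  proof (intro CollectI exI conjI)
    show "(e + c) + (a + e) - (e + c) * (a + e) = 0"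
      using ea ee ca2 ce by (simp add: algebra_simps)
    show "(a + e) + (e + c) - (a + e) * (e + c) = 0"
      using ae ee ec by (simp add: algebra_simps e_def)
  qed
  show ?thesis unfolding quasipolar_elem_def
    using ee c2 Q ae zero_in_QN by auto
qed

lemma qp_sr:
  fixes a :: "'a::ring"
  assumes qp: "quasipolar_elem a" and QN: "(QNset :: 'a set) = {0}"
  shows "strongly_regular_elem a"
proof -
  from qp obtain p where p: "p * p = p" "p \<in> comm2 a" "a + p \<in> Qset" "a - a * p \<in> QNset"
    unfolding quasipolar_elem_def by auto
  have "a - a * p = 0" using p(4) QN by blast
  hence ap: "a * p = a" by simp
  have "a \<in> comm a" unfolding comm_def by simp
  hence pa: "p * a = a" using p(2) ap unfolding comm2_def by auto
  from p(3) obtain r where r: "r + (a + p) - r * (a + p) = 0" "(a + p) + r - (a + p) * r = 0"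
    unfolding Qset_def circ_op_def by auto
  have rs: "r * (a + p) = r + (a + p)" using r(1) by (simp add: algebra_simps)
  have sr: "(a + p) * r = r + (a + p)" using r(2) by (simp add: algebra_simps)
  have sp: "(a + p) * p = a + p" using ap p(1) by (simp add: algebra_simps)
  have ps: "p * (a + p) = a + p" using pa p(1) by (simp add: algebra_simps)
  have "r * p + (a + p) = r * (a + p)"
  proof -
    have "(r * (a + p)) * p = (r + (a + p)) * p" using rs by simp
    moreover have "(r * (a + p)) * p = r * (a + p)" using sp by (simp only: mult.assoc)
    moreover have "(r + (a + p)) * p = r * p + (a + p)" using sp by (simp only: distrib_right)
    ultimately show ?thesis by simp
  qed
  hence rp: "r * p = r" using rs by simp
  have "p * r + (a + p) = (a + p) * r"
  proof -
    have "p * ((a + p) * r) = p * (r + (a + p))" using sr by simp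
    moreover have "p * ((a + p) * r) = (a + p) * r" using ps by (simp only: mult.assoc[symmetric])
    moreover have "p * (r + (a + p)) = p * r + (a + p)" using ps by (simp only: distrib_left)
    ultimately show ?thesis by simp
  qed
  hence pr: "p * r = r" using sr by simp
  have ra: "r * a = a + p" using rs rp by (simp add: algebra_simps)
  have ar: "a * r = a + p" using sr pr by (simp add: algebra_simps)
  have abp: "a * (r - p) = p" using ar ap by (simp add: algebra_simps)
  have bap: "(r - p) * a = p" using ra pa by (simp add: algebra_simps)
  show ?thesis unfolding strongly_regular_elem_def
    by (rule exI[of _ "r - p"]) (simp add: abp bap pa)
qed

theorem proposition2p18:
  "strongly_regular_ring TYPE('a::ring) \<longleftrightarrow>
     (quasipolar_ring TYPE('a) \<and> (QNset :: 'a set) = {0})"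
proof
  assume h: "strongly_regular_ring TYPE('a::ring)"
  hence s: "\<And>x::'a. strongly_regular_elem x" unfolding strongly_regular_ring_def by auto
  have "quasipolar_ring TYPE('a)" unfolding quasipolar_ring_def using s sr_qp by blast
  moreover have "(QNset :: 'a set) = {0}" using s sr_QN zero_in_QN by blast
  ultimately show "quasipolar_ring TYPE('a) \<and> (QNset :: 'a set) = {0}" by simp
next
  assume "quasipolar_ring TYPE('a) \<and> (QNset :: 'a set) = {0}"
  thus "strongly_regular_ring TYPE('a::ring)"
    unfolding strongly_regular_ring_def quasipolar_ring_def using qp_sr by blast
qed

end
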